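(* Fix a start pose $\mathbf{p}_0=(x_0,y_0,\theta_0)$ and CSC inputs $\mathbf{u}_i=(v_i,\omega_i)$, $i=1,2,3$ ($v_i>0$, $\omega_1\neq0$, $\omega_2=0$, $\omega_3\neq0$). A pose $\mathbf{p}_f=(x_f,y_f,\theta_f)$ is reachable from $\mathbf{p}_0$ by the CSC path with these inputs if and only if $$(x_f-c)^2+(y_f-d)^2\ \ge\ r_{31}^2,$$ where $c=x_0-r_1\sin\theta_0+r_3\sin\theta_f$ and $d=y_0+r_1\cos\theta_0-r_3\cos\theta_f$.
   Context: A pose is $\mathbf{p}=(x,y,\theta)$, heading understood modulo $2\pi$. An input is $\mathbf{u}=(v,\omega)$. The motion primitive $\mathrm{M}_{\mathbf{u},\tau}$ maps $(x,y,\theta)$ to: if $\omega\neq0$, $\big(x-\frac{v}{\omega}(\sin\theta-\sin(\theta+\omega\tau)),\ y+\frac{v}{\omega}(\cos\theta-\cos(\theta+\omega\tau)),\ \theta+\omega\tau\big)$; if $\omega=0$, $(x+v\tau\cos\theta,\ y+v\tau\sin\theta,\ \theta)$. For a fixed path type with fixed inputs $\mathbf{u}_1,\mathbf{u}_2,\mathbf{u}_3$, a pose $\mathbf{p}_f$ is reachable from $\mathbf{p}_0$ if there exist durations $\tau_1,\tau_2,\tau_3\ge0$, with $|\omega_i\tau_i|<2\pi$ for each turning segment, such that $\mathrm{M}_{\mathbf{u}_3,\tau_3}(\mathrm{M}_{\mathbf{u}_2,\tau_2}(\mathrm{M}_{\mathbf{u}_1,\tau_1}(\mathbf{p}_0)))$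 has position $(x_f,y_f)$ and heading congruent to $\theta_f$ modulo $2\pi$. Notation: $r_i=v_i/\omega_i$ for turning segments, $r_{31}=r_3-r_1$. *)

theory Defs
  imports Complex_Main
begin

type_synonym pose = "real \<times> real \<times> real"   (* (x, y, theta) *)
type_synonym input = "real \<times> real"          (* (v, omega) *)

definition motion :: "input \<Rightarrow> real \<Rightarrow> pose \<Rightarrow> pose" where
  "motion u \<tau> p = (case u of (v, \<omega>) \<Rightarrow> case p of (x, y, \<theta>) \<Rightarrow>
     if \<omega> \<noteq> 0 then
       (x - v / \<omega> * (sin \<theta> - sin (\<theta> + \<omega> * \<tau>)),
        y + v / \<omega> * (cos \<theta> - cos (\<theta> + \<omega> * \<tau>)),
        \<theta> + \<omega> * \<tau>)
     else (x + v * \<tau> * cos \<theta>, y + v * \<tau> * sin \<theta>, \<theta>))"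

definition admissible :: "input \<Rightarrow> real \<Rightarrow> bool" where
  "admissible u \<tau> \<longleftrightarrow> \<tau> \<ge> 0 \<and> (snd u \<noteq> 0 \<longrightarrow> \<bar>snd u * \<tau>\<bar> < 2 * pi)"

definition pose_equiv :: "pose \<Rightarrow> pose \<Rightarrow> bool" where
  "pose_equiv p q \<longleftrightarrow> fst p = fst q \<and> fst (snd p) = fst (snd q) \<and>
     (\<exists>k::int. snd (snd p) = snd (snd q) + 2 * pi * of_int k)"

definition reachable3 :: "input \<Rightarrow> input \<Rightarrow> input \<Rightarrow> pose \<Rightarrow> pose \<Rightarrow> bool" where
  "reachable3 u1 u2 u3 p0 pf \<longleftrightarrow>
     (\<exists>\<tau>1 \<tau>2 \<tau>3. admissible u1 \<tau>1 \<and> admissible u2 \<tau>2 \<and> admissible u3 \<tau>3 \<and>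
        pose_equiv (motion u3 \<tau>3 (motion u2 \<tau>2 (motion u1 \<tau>1 p0))) pf)"

end

theory Submission
  imports Defs
begin

lemma floor_bounds_2pi:
  fixes z :: real
  shows "0 \<le> z - 2*pi*of_int \<lfloor>z/(2*pi)\<rfloor> \<and> z - 2*pi*of_int \<lfloor>z/(2*pi)\<rfloor> < 2*pi"
proof -
  have p: "2*pi > 0" by simp
  have "of_int \<lfloor>z/(2*pi)\<rfloor> \<le> z/(2*pi)" by (rule of_int_floor_le)
  hence "2*pi*of_int \<lfloor>z/(2*pi)\<rfloor> \<le> 2*pi*(z/(2*pi))" using p by (intro mult_left_mono) auto
  hence a: "2*pi*of_int \<lfloor>z/(2*pi)\<rfloor> \<le> z" by simp
  have "z/(2*pi) < of_int \<lfloor>z/(2*pi)\<rfloor> + 1" by (rule real_of_int_floor_add_one_gt)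
  hence "2*pi*(z/(2*pi)) < 2*pi*(of_int \<lfloor>z/(2*pi)\<rfloor> + 1)" using p by (intro mult_strict_left_mono) auto
  hence b: "z < 2*pi*of_int \<lfloor>z/(2*pi)\<rfloor> + 2*pi" by (simp add: algebra_simps)
  show ?thesis using a b by linarith
qed

lemma angle_reach:
  fixes \<omega> a b :: real
  assumes "\<omega> \<noteq> 0"
  shows "\<exists>\<tau>. \<tau> \<ge> 0 \<and> \<bar>\<omega>*\<tau>\<bar> < 2*pi \<and> (\<exists>k::int. a + \<omega>*\<tau> = b + 2*pi*of_int k)"
proof (cases "\<omega> > 0")
  case True
  define k where "k = \<lfloor>(b-a)/(2*pi)\<rfloor>"
  define \<delta> where "\<delta> = (b-a) - 2*pi*of_int k"
  have d: "0 \<le> \<delta>" "\<delta> < 2*pi" using floor_bounds_2pi[of "b-a"] unfolding \<delta>_def k_def by auto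
  show ?thesis
  proof (intro exI conjI)
    show "\<delta>/\<omega> \<ge> 0" using d True by simp
    have e: "\<omega>*(\<delta>/\<omega>) = \<delta>" using assms by simp
    show "\<bar>\<omega>*(\<delta>/\<omega>)\<bar> < 2*pi" using e d by simp
    show "a + \<omega>*(\<delta>/\<omega>) = b + 2*pi*of_int (-k)" using e unfolding \<delta>_def by simp
  qed
next
  case False
  hence neg: "\<omega> < 0" using assms by simp
  define k where "k = \<lfloor>(a-b)/(2*pi)\<rfloor>"
  define \<delta> where "\<delta> = (a-b) - 2*pi*of_int k"
  have d: "0 \<le> \<delta>" "\<delta> < 2*pi" using floor_bounds_2pi[of "a-b"] unfolding \<delta>_def k_def by auto
  show ?thesis
  proof (intro exI conjI)
    show "-\<delta>/\<omega> \<ge> 0" using d neg by (simp add: divide_nonneg_nonpos)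
    have e: "\<omega>*(-\<delta>/\<omega>) = -\<delta>" using assms by simp
    show "\<bar>\<omega>*(-\<delta>/\<omega>)\<bar> < 2*pi" using e d by simp
    show "a + \<omega>*(-\<delta>/\<omega>) = b + 2*pi*of_int k" using e unfolding \<delta>_def by simp
  qed
qed

lemma sin_shift: "sin (b + 2*pi*of_int (k::int)) = sin b"
  by (simp add: sin_add)
lemma cos_shift: "cos (b + 2*pi*of_int (k::int)) = cos b"
  by (simp add: cos_add)

lemma rot_exists:
  fixes X Y r L :: real
  assumes "L\<^sup>2 + r\<^sup>2 = X\<^sup>2 + Y\<^sup>2"
  shows "\<exists>t. X = L * cos t - r * sin t \<and> Y = L * sin t + r * cos t"
proof (cases "X\<^sup>2 + Y\<^sup>2 = 0")
  case True
  hence "L = 0" "r = 0" "X = 0" "Y = 0" using assms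
    by (smt (verit) power2_less_eq_zero_iff zero_le_power2 sum_power2_eq_zero_iff)+
  thus ?thesis by simp
next
  case False
  define N where "N = X\<^sup>2 + Y\<^sup>2"
  have N: "N \<noteq> 0" using False N_def by simp
  have "((L*X + r*Y)/N)\<^sup>2 + ((L*Y - r*X)/N)\<^sup>2 = (L\<^sup>2 + r\<^sup>2)*(X\<^sup>2+Y\<^sup>2)/N\<^sup>2"
    by (simp add: power_divide add_divide_distrib[symmetric]) (simp add: power2_eq_square algebra_simps)
  also have "\<dots> = 1" using assms N unfolding N_def by (simp add: power2_eq_square)
  finally obtain t where t: "(L*X + r*Y)/N = cos t" "(L*Y - r*X)/N = sin t"
    using sincos_total_2pi by metis
  have "L * cos t - r * sin t = (L*(L*X + r*Y) - r*(L*Y - r*X))/N"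
    unfolding t[symmetric] using N by (simp add: field_simps)
  also have "L*(L*X + r*Y) - r*(L*Y - r*X) = (L\<^sup>2 + r\<^sup>2)*X" by (simp add: power2_eq_square algebra_simps)
  finally have X1: "X = L * cos t - r * sin t" using N assms unfolding N_def by simp
  have "L * sin t + r * cos t = (L*(L*Y - r*X) + r*(L*X + r*Y))/N"
    unfolding t[symmetric] using N by (simp add: field_simps)
  moreover have "L*(L*Y - r*X) + r*(L*X + r*Y) = (L\<^sup>2 + r\<^sup>2)*Y" by (simp add: power2_eq_square algebra_simps)
  ultimately have "Y = L * sin t + r * cos t" using N assms unfolding N_def by simp
  thus ?thesis using X1 by blast
qed


lemma ring_id: "(a * x + b * y)\<^sup>2 + (b * x - a * y)\<^sup>2 = (a\<^sup>2 + b\<^sup>2) * (x\<^sup>2 + y\<^sup>2)" for a b x y :: real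
  by algebra

lemma rot_norm: "(a * sin s + b * cos s)\<^sup>2 + (b * sin s - a * cos s)\<^sup>2 = (a::real)\<^sup>2 + b\<^sup>2"
proof -
  have "(a * sin s + b * cos s)\<^sup>2 + (b * sin s - a * cos s)\<^sup>2 = (a\<^sup>2 + b\<^sup>2) * ((sin s)\<^sup>2 + (cos s)\<^sup>2)"
    using ring_id[of a "sin s" b "cos s"] .
  thus ?thesis by simp
qed

theorem theorem1:
  fixes x0 y0 \<theta>0 xf yf \<theta>f v1 \<omega>1 v2 \<omega>2 v3 \<omega>3 :: real
  assumes "v1 > 0" "v2 > 0" "v3 > 0"
    and "\<omega>1 \<noteq> 0" "\<omega>2 = 0" "\<omega>3 \<noteq> 0"
  shows "reachable3 (v1, \<omega>1) (v2, \<omega>2) (v3, \<omega>3) (x0, y0, \<theta>0) (xf, yf, \<theta>f) \<longleftrightarrow>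
    (let r1 = v1 / \<omega>1; r3 = v3 / \<omega>3; r31 = r3 - r1;
         c = x0 - r1 * sin \<theta>0 + r3 * sin \<theta>f;
         d = y0 + r1 * cos \<theta>0 - r3 * cos \<theta>f
     in (xf - c)\<^sup>2 + (yf - d)\<^sup>2 \<ge> r31\<^sup>2)"
proof -
  define r1 where "r1 = v1 / \<omega>1"
  define r3 where "r3 = v3 / \<omega>3"
  define X where "X = xf - (x0 - r1 * sin \<theta>0 + r3 * sin \<theta>f)"
  define Y where "Y = yf - (y0 + r1 * cos \<theta>0 - r3 * cos \<theta>f)"
  define P where "P = (\<lambda>s t2 t3. \<exists>k::int. s + \<omega>3*t3 = \<theta>f + 2*pi*of_int k \<and>
        X = (r1 - r3) * sin s + v2*t2 * cos s \<and> Y = v2*t2 * sin s - (r1 - r3) * cos s)"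
  have eq: "(x0 - v1 / \<omega>1 * (sin \<theta>0 - sin s) + v2 * t2 * cos s - v3 / \<omega>3 * (sin s - sin (s + \<omega>3 * t3)) = xf \<and>
         y0 + v1 / \<omega>1 * (cos \<theta>0 - cos s) + v2 * t2 * sin s + v3 / \<omega>3 * (cos s - cos (s + \<omega>3 * t3)) = yf \<and>
         (\<exists>k::int. s + \<omega>3 * t3 = \<theta>f + 2 * pi * of_int k)) \<longleftrightarrow> P s t2 t3"
    for s t2 t3
  proof (cases "\<exists>k::int. s + \<omega>3 * t3 = \<theta>f + 2 * pi * of_int k")
    case True
    then obtain k where k: "s + \<omega>3 * t3 = \<theta>f + 2 * pi * of_int (k::int)" by blast
    hence "sin (s + \<omega>3 * t3) = sin \<theta>f" "cos (s + \<omega>3 * t3) = cos \<theta>f"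
      by (simp_all add: sin_shift cos_shift)
    moreover have "P s t2 t3 \<longleftrightarrow> X = (r1 - r3) * sin s + v2*t2 * cos s \<and> Y = v2*t2 * sin s - (r1 - r3) * cos s"
      unfolding P_def using k by auto
    ultimately show ?thesis using True unfolding X_def Y_def r1_def r3_def
      by (auto simp: algebra_simps)
  qed (auto simp: P_def)
  have m: "motion (v3,\<omega>3) t3 (motion (v2,\<omega>2) t2 (motion (v1,\<omega>1) t1 (x0,y0,\<theta>0))) =
     (x0 - v1 / \<omega>1 * (sin \<theta>0 - sin (\<theta>0 + \<omega>1 * t1)) + v2 * t2 * cos (\<theta>0 + \<omega>1 * t1) - v3 / \<omega>3 * (sin (\<theta>0 + \<omega>1 * t1) - sin ((\<theta>0 + \<omega>1 * t1) + \<omega>3 * t3)),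
      y0 + v1 / \<omega>1 * (cos \<theta>0 - cos (\<theta>0 + \<omega>1 * t1)) + v2 * t2 * sin (\<theta>0 + \<omega>1 * t1) + v3 / \<omega>3 * (cos (\<theta>0 + \<omega>1 * t1) - cos ((\<theta>0 + \<omega>1 * t1) + \<omega>3 * t3)),
      (\<theta>0 + \<omega>1 * t1) + \<omega>3 * t3)" for t1 t2 t3
    using assms by (simp add: motion_def)
  have key: "reachable3 (v1, \<omega>1) (v2, \<omega>2) (v3, \<omega>3) (x0, y0, \<theta>0) (xf, yf, \<theta>f) \<longleftrightarrow>
     (\<exists>\<tau>1 \<tau>2 \<tau>3. (\<tau>1 \<ge> 0 \<and> \<bar>\<omega>1*\<tau>1\<bar> < 2*pi) \<and> \<tau>2 \<ge> 0 \<and> (\<tau>3 \<ge> 0 \<and> \<bar>\<omega>3*\<tau>3\<bar> < 2*pi) \<and>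
        P (\<theta>0 + \<omega>1*\<tau>1) \<tau>2 \<tau>3)"
    unfolding reachable3_def pose_equiv_def m fst_conv snd_conv eq[symmetric]
    using assms by (simp add: admissible_def)
  have "reachable3 (v1, \<omega>1) (v2, \<omega>2) (v3, \<omega>3) (x0, y0, \<theta>0) (xf, yf, \<theta>f) \<longleftrightarrow> X\<^sup>2 + Y\<^sup>2 \<ge> (r3 - r1)\<^sup>2"
  proof
    assume "reachable3 (v1, \<omega>1) (v2, \<omega>2) (v3, \<omega>3) (x0, y0, \<theta>0) (xf, yf, \<theta>f)"
    then obtain \<tau>1 \<tau>2 where
      h: "X = (r1 - r3) * sin (\<theta>0 + \<omega>1*\<tau>1) + v2*\<tau>2 * cos (\<theta>0 + \<omega>1*\<tau>1)"
         "Y = v2*\<tau>2 * sin (\<theta>0 + \<omega>1*\<tau>1) - (r1 - r3) * cos (\<theta>0 + \<omega>1*\<tau>1)"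
      using key unfolding P_def by blast
    define s where "s = \<theta>0 + \<omega>1*\<tau>1"
    have "X\<^sup>2 + Y\<^sup>2 = (r1 - r3)\<^sup>2 + (v2*\<tau>2)\<^sup>2"
      unfolding h s_def[symmetric] by (rule rot_norm)
    also have "\<dots> = (r3 - r1)\<^sup>2 + (v2*\<tau>2)\<^sup>2" by (simp add: power2_commute)
    finally have "X\<^sup>2 + Y\<^sup>2 = (r3 - r1)\<^sup>2 + (v2*\<tau>2)\<^sup>2" .
    moreover have "(v2*\<tau>2)\<^sup>2 \<ge> 0" by simp
    ultimately show "X\<^sup>2 + Y\<^sup>2 \<ge> (r3 - r1)\<^sup>2" by linarith
  next
    assume ge: "X\<^sup>2 + Y\<^sup>2 \<ge> (r3 - r1)\<^sup>2"
    define L where "L = sqrt (X\<^sup>2 + Y\<^sup>2 - (r3 - r1)\<^sup>2)"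
    have L0: "L \<ge> 0" unfolding L_def using ge by simp
    have "L\<^sup>2 + (r3 - r1)\<^sup>2 = X\<^sup>2 + Y\<^sup>2" proof -
      have "0 \<le> X\<^sup>2 + Y\<^sup>2 - (r3 - r1)\<^sup>2" using ge by linarith
      thus ?thesis unfolding L_def by simp
    qed
    then obtain t where t: "X = L * cos t - (r3 - r1) * sin t" "Y = L * sin t + (r3 - r1) * cos t"
      using rot_exists by blast
    obtain \<tau>1 k1 where a1: "\<tau>1 \<ge> 0" "\<bar>\<omega>1*\<tau>1\<bar> < 2*pi" "\<theta>0 + \<omega>1*\<tau>1 = t + 2*pi*of_int (k1::int)"
      using angle_reach[OF assms(4), of \<theta>0 t] by blast
    obtain \<tau>3 k3 where a3: "\<tau>3 \<ge> 0" "\<bar>\<omega>3*\<tau>3\<bar> < 2*pi" "t + \<omega>3*\<tau>3 = \<theta>f + 2*pi*of_int (k3::int)"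
      using angle_reach[OF assms(6), of t \<theta>f] by blast
    define \<tau>2 where "\<tau>2 = L / v2"
    have t2: "\<tau>2 \<ge> 0" "v2 * \<tau>2 = L" unfolding \<tau>2_def using L0 assms(2) by simp_all
    have s1: "sin (\<theta>0 + \<omega>1*\<tau>1) = sin t" "cos (\<theta>0 + \<omega>1*\<tau>1) = cos t"
      using a1(3) by (simp_all add: sin_shift cos_shift)
    have h: "(\<theta>0 + \<omega>1*\<tau>1) + \<omega>3*\<tau>3 = \<theta>f + 2*pi*of_int (k1 + k3)"
      using a1(3) a3(3) by (simp add: algebra_simps)
    show "reachable3 (v1, \<omega>1) (v2, \<omega>2) (v3, \<omega>3) (x0, y0, \<theta>0) (xf, yf, \<theta>f)"
      unfolding key P_def
      apply (rule exI[of _ \<tau>1], rule exI[of _ \<tau>2], rule exI[of _ \<tau>3])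
      apply (intro conjI a1(1) a1(2) a3(1) a3(2) t2(1) exI[of _ "k1 + k3"] h)
      using t2 s1 t by (simp_all add: algebra_simps)
  qed
  thus ?thesis unfolding r1_def r3_def X_def Y_def Let_def .
qed

end
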